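(* Let $\alpha=\alpha(\delta,f^\delta)$ be chosen by the discrepancy principle with fixed radii $1<\underline\tau\le\overline\tau<\infty$, and suppose $\varphi^\dagger$ satisfies the variational source condition with constant $\sigma\in(0,1]$ and concave index function $\Psi$, and in particular that $\frac{\sigma}{2}\big(J(\varphi^\dagger)-J(\varphi)\big)\le\Psi(\|\mathcal T\varphi-\mathcal T\varphi^\dagger\|_{\mathcal H})$ for all $\varphi\in\mathcal V$. Then $$\frac{\sigma}{4}(\underline\tau-1)\frac{\delta^2}{\Psi(\delta)}\le\alpha(\delta,f^\delta).$$
   Context: Let $\mathcal V$ be a Banach space with dual pairing $\langle\cdot,\cdot\rangle$, $\mathcal H$ a Hilbert space, and $\mathcal T:\mathcal V\to\mathcal H$ a bounded linear, injective, compact operator. Let $J:\mathcal V\to[0,\infty)$ be convex, with subdifferential $\partial J(u)=\{p\in\mathcal V^*: J(v)-J(u)-\langle p,v-u\rangle\ge0\ \forall v\}$; for $p\in\partial J(u^* )$ the Bregman distance is $D_J(u,u^* )=J(u)-J(u^* )-\langle p,u-u^*\rangle$. Exact data $f^\dagger$, noise level $\delta>0$, noisy data $f^\delta$ with $\|f^\dagger-f^\delta\|_{\mathcal H}\le\delta$. $F_\alpha(\varphi,f^\delta)=\frac12\|\mathcal T\varphi-f^\delta\|^2_{\mathcal H}+\alpha J(\varphi)$ and $\varphi^\delta_\alpha$ is a minimizer of $F_\alpha(\cdot,f^\delta)$. $\varphi^\dagger$ is a $J$-minimizing solution: $\mathcal T\varphi^\dagger=f^\dagger$, $J(\varphi^\dagger)=\min\{J(\varphi):\mathcal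 T\varphi=f^\dagger\}$. An index function is a continuous, monotonically increasing $\Psi:[0,\infty)\to[0,\infty)$ with $\Psi(0)=0$, positive on $(0,\infty)$. Discrepancy principle: $\underline\tau\delta\le\|\mathcal T\varphi^\delta_{\alpha(\delta,f^\delta)}-f^\delta\|_{\mathcal H}\le\overline\tau\delta$. Variational source condition (VSC): there exist $\sigma\in(0,1]$ and a concave index function $\Psi$ with $\frac\sigma2D_J(\varphi,\varphi^\dagger)\le J(\varphi)-J(\varphi^\dagger)+\Psi(\|\mathcal T\varphi-\mathcal T\varphi^\dagger\|_{\mathcal H})$ for all $\varphi\in\mathcal V$ (with a fixed $p\in\partial J(\varphi^\dagger)$). *)

theory Defs
  imports "HOL-Analysis.Analysis"
begin

text \<open>Elements of the dual space V* are represented as bounded linear functionals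
  'v \<Rightarrow> real; the dual pairing is application.\<close>

definition compact_operator :: "('v::real_normed_vector \<Rightarrow> 'h::real_normed_vector) \<Rightarrow> bool" where
  "compact_operator T \<longleftrightarrow> bounded_linear T \<and>
     (\<forall>S. bounded S \<longrightarrow> compact (closure (T ` S)))"

definition subdiff :: "('v::real_normed_vector \<Rightarrow> real) \<Rightarrow> 'v \<Rightarrow> ('v \<Rightarrow> real) set" where
  "subdiff J u = {p. bounded_linear p \<and> (\<forall>v. J v - J u - p (v - u) \<ge> 0)}"

definition bregman :: "('v::real_normed_vector \<Rightarrow> real) \<Rightarrow> ('v \<Rightarrow> real) \<Rightarrow> 'v \<Rightarrow> 'v \<Rightarrow> real" where
  "bregman J p u ustar = J u - J ustar - p (u - ustar)"

definition tikhonov :: "('v \<Rightarrow> 'h::real_normed_vector) \<Rightarrow> ('v \<Rightarrow> real) \<Rightarrow> real \<Rightarrow> 'v \<Rightarrow> 'h \<Rightarrow> real" where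
  "tikhonov T J \<alpha> \<phi> f = (1/2) * (norm (T \<phi> - f))\<^sup>2 + \<alpha> * J \<phi>"

definition index_function :: "(real \<Rightarrow> real) \<Rightarrow> bool" where
  "index_function \<Psi> \<longleftrightarrow> continuous_on {0..} \<Psi> \<and> mono_on {0..} \<Psi> \<and> \<Psi> 0 = 0
     \<and> (\<forall>t>0. \<Psi> t > 0)"

definition J_minimizing_solution :: "('v \<Rightarrow> 'h) \<Rightarrow> ('v \<Rightarrow> real) \<Rightarrow> 'h \<Rightarrow> 'v \<Rightarrow> bool" where
  "J_minimizing_solution T J f \<phi> \<longleftrightarrow> T \<phi> = f \<and> (\<forall>\<psi>. T \<psi> = f \<longrightarrow> J \<phi> \<le> J \<psi>)"

definition VSC :: "('v::real_normed_vector \<Rightarrow> 'h::real_normed_vector) \<Rightarrow> ('v \<Rightarrow> real) \<Rightarrow> ('v \<Rightarrow> real)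
     \<Rightarrow> real \<Rightarrow> (real \<Rightarrow> real) \<Rightarrow> 'v \<Rightarrow> bool" where
  "VSC T J p \<sigma> \<Psi> \<phi>d \<longleftrightarrow> 0 < \<sigma> \<and> \<sigma> \<le> 1 \<and> index_function \<Psi> \<and> concave_on {0..} \<Psi>
     \<and> p \<in> subdiff J \<phi>d
     \<and> (\<forall>\<phi>. \<sigma> / 2 * bregman J p \<phi> \<phi>d \<le> J \<phi> - J \<phi>d + \<Psi> (norm (T \<phi> - T \<phi>d)))"

end

theory Submission
  imports Defs
begin

lemma concave_ratio:
  fixes \<Psi> :: "real \<Rightarrow> real"
  assumes c: "concave_on {0..} \<Psi>" and z: "\<Psi> 0 = 0" and d: "0 < d" and r: "d \<le> r"
  shows "\<Psi> r \<le> r / d * \<Psi> d"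
proof -
  have "(1 - d/r) * \<Psi> 0 + (d/r) * \<Psi> r \<le> \<Psi> ((1 - d/r) *\<^sub>R 0 + (d/r) *\<^sub>R r)"
    using concave_onD[OF c, of "d/r" 0 r] d r by auto
  then have "d/r * \<Psi> r \<le> \<Psi> d" using z d r by simp
  then have "r * (d/r * \<Psi> r) \<le> r * \<Psi> d" using d r by (intro mult_left_mono) auto
  then have "d * \<Psi> r \<le> r * \<Psi> d" using d r by simp
  then show ?thesis using d by (simp add: field_simps)
qed

theorem mainTheorem2:
  fixes T :: "'v::banach \<Rightarrow> 'h::{real_inner, complete_space}"
    and J :: "'v \<Rightarrow> real" and p :: "'v \<Rightarrow> real"
    and \<Psi> :: "real \<Rightarrow> real"
    and \<phi>d \<phi>\<alpha> :: 'v and fd f\<delta> :: 'h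
    and \<delta> \<alpha> \<sigma> \<tau>l \<tau>u :: real
  assumes T_compact: "compact_operator T" and T_inj: "inj T"
    and J_nonneg: "\<forall>v. 0 \<le> J v" and J_convex: "convex_on UNIV J"
    and \<delta>_pos: "\<delta> > 0" and noise: "norm (fd - f\<delta>) \<le> \<delta>"
    and sol: "J_minimizing_solution T J fd \<phi>d"
    and \<alpha>_pos: "\<alpha> > 0"
    and minimizer: "\<forall>\<phi>. tikhonov T J \<alpha> \<phi>\<alpha> f\<delta> \<le> tikhonov T J \<alpha> \<phi> f\<delta>"
    and radii: "1 < \<tau>l" "\<tau>l \<le> \<tau>u"
    and discrepancy: "\<tau>l * \<delta> \<le> norm (T \<phi>\<alpha> - f\<delta>)" "norm (T \<phi>\<alpha> - f\<delta>) \<le> \<tau>u * \<delta>"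
    and vsc: "VSC T J p \<sigma> \<Psi> \<phi>d"
    and extra: "\<forall>\<phi>. \<sigma> / 2 * (J \<phi>d - J \<phi>) \<le> \<Psi> (norm (T \<phi> - T \<phi>d))"
  shows "\<sigma> / 4 * (\<tau>l - 1) * \<delta>\<^sup>2 / \<Psi> \<delta> \<le> \<alpha>"
  proof -
  have ix: "index_function \<Psi>" and cc: "concave_on {0..} \<Psi>" and sg: "0 < \<sigma>"
    using vsc unfolding VSC_def by auto
  have z: "\<Psi> 0 = 0" and mo: "mono_on {0..} \<Psi>" and P: "\<Psi> \<delta> > 0"
    using ix \<delta>_pos unfolding index_function_def by auto
  have Td: "T \<phi>d = fd" using sol unfolding J_minimizing_solution_def by auto
  define a where "a = norm (T \<phi>\<alpha> - f\<delta>)"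
  define r where "r = norm (T \<phi>\<alpha> - fd)"
  define m where "m = max \<delta> r"
  have H1: "(1/2) * a\<^sup>2 + \<alpha> * J \<phi>\<alpha> \<le> (1/2) * (norm (fd - f\<delta>))\<^sup>2 + \<alpha> * J \<phi>d"
    using minimizer[rule_format, of \<phi>d] Td unfolding tikhonov_def a_def by simp
  have "(norm (fd - f\<delta>))\<^sup>2 \<le> \<delta>\<^sup>2" using noise by (simp add: power_mono)
  with H1 have H1': "a\<^sup>2 - \<delta>\<^sup>2 \<le> 2 * \<alpha> * (J \<phi>d - J \<phi>\<alpha>)" by (simp add: algebra_simps)
  have H2: "\<sigma> * (J \<phi>d - J \<phi>\<alpha>) \<le> 2 * \<Psi> r"
    using extra[rule_format, of \<phi>\<alpha>] Td unfolding r_def by simp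
  have "\<sigma> * (a\<^sup>2 - \<delta>\<^sup>2) \<le> \<sigma> * (2 * \<alpha> * (J \<phi>d - J \<phi>\<alpha>))"
    using H1' sg by (intro mult_left_mono) auto
  also have "\<dots> = 2 * \<alpha> * (\<sigma> * (J \<phi>d - J \<phi>\<alpha>))" by simp
  also have "\<dots> \<le> 2 * \<alpha> * (2 * \<Psi> r)" using H2 \<alpha>_pos by (intro mult_left_mono) auto
  finally have H3: "\<sigma> * (a\<^sup>2 - \<delta>\<^sup>2) \<le> 4 * \<alpha> * \<Psi> r" by simp
  have r0: "0 \<le> r" unfolding r_def by simp
  have H4: "\<Psi> r \<le> m / \<delta> * \<Psi> \<delta>"
  proof (cases "\<delta> \<le> r")
    case True then show ?thesis using concave_ratio[OF cc z \<delta>_pos True] by (simp add: m_def)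
  next
    case False
    then have "\<Psi> r \<le> \<Psi> \<delta>" using mo r0 \<delta>_pos by (auto intro: mono_onD)
    then show ?thesis using False \<delta>_pos by (simp add: m_def)
  qed
  have tri: "r \<le> a + \<delta>"
  proof -
    have "T \<phi>\<alpha> - fd = (T \<phi>\<alpha> - f\<delta>) + (f\<delta> - fd)" by simp
    then have "r \<le> a + norm (f\<delta> - fd)" unfolding r_def a_def by (metis norm_triangle_ineq)
    moreover have "norm (f\<delta> - fd) = norm (fd - f\<delta>)" by (simp add: norm_minus_commute)
    ultimately show ?thesis using noise by simp
  qed
  have al: "\<tau>l * \<delta> \<le> a" using discrepancy unfolding a_def by simp
  have am: "m \<le> a + \<delta>" using tri al radii \<delta>_pos unfolding m_def a_def by auto
  have amd: "(\<tau>l - 1) * \<delta> \<le> a - \<delta>" using al by (simp add: algebra_simps)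
  have "0 \<le> (\<tau>l - 1) * \<delta>" using radii \<delta>_pos by simp
  then have da: "\<delta> \<le> a" using amd by simp
  have m0: "m > 0" using \<delta>_pos unfolding m_def by auto
  have "(\<tau>l - 1) * \<delta> * m \<le> (a - \<delta>) * (a + \<delta>)"
    using amd am m0 radii da \<delta>_pos by (intro mult_mono) auto
  also have "\<dots> = a\<^sup>2 - \<delta>\<^sup>2" by (simp add: power2_eq_square algebra_simps)
  finally have H5: "(\<tau>l - 1) * \<delta> * m \<le> a\<^sup>2 - \<delta>\<^sup>2" .
  have "\<sigma> * ((\<tau>l - 1) * \<delta> * m) \<le> \<sigma> * (a\<^sup>2 - \<delta>\<^sup>2)" using H5 sg by (intro mult_left_mono) auto
  also have "\<dots> \<le> 4 * \<alpha> * \<Psi> r" by (rule H3)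
  also have "\<dots> \<le> 4 * \<alpha> * (m / \<delta> * \<Psi> \<delta>)" using H4 \<alpha>_pos by (intro mult_left_mono) auto
  finally have H6: "\<sigma> * ((\<tau>l - 1) * \<delta> * m) \<le> 4 * \<alpha> * (m / \<delta> * \<Psi> \<delta>)" .
  have "(\<sigma> * (\<tau>l - 1) * \<delta>\<^sup>2) * (m / \<delta>) \<le> (4 * \<alpha> * \<Psi> \<delta>) * (m / \<delta>)"
  proof -
    have e1: "(\<sigma> * (\<tau>l - 1) * \<delta>\<^sup>2) * (m / \<delta>) = \<sigma> * ((\<tau>l - 1) * \<delta> * m)"
      using \<delta>_pos by (simp add: power2_eq_square)
    have e2: "(4 * \<alpha> * \<Psi> \<delta>) * (m / \<delta>) = 4 * \<alpha> * (m / \<delta> * \<Psi> \<delta>)" by simp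
    show ?thesis using H6 by (simp only: e1 e2)
  qed
  then have "\<sigma> * (\<tau>l - 1) * \<delta>\<^sup>2 \<le> 4 * \<alpha> * \<Psi> \<delta>"
  proof -
    have "m / \<delta> > 0" using m0 \<delta>_pos by simp
    then show ?thesis using \<open>(\<sigma> * (\<tau>l - 1) * \<delta>\<^sup>2) * (m / \<delta>) \<le> (4 * \<alpha> * \<Psi> \<delta>) * (m / \<delta>)\<close>
      by (meson mult_le_cancel_right_pos)
  qed
  then show ?thesis using P by (simp add: field_simps)
qed

end
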